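(* Let $T_1,T_2$ be unordered increasing trees with disjoint vertex-sets, let $v_1\in V(T_1)$, $v_2\in V(T_2)$ with $v_1>v_2$, and let $R=\mathrm{spl}(T_1,v_1;T_2,v_2)$. Then: (a) For $\ell\in\{1,2\}$ and any vertices $i,j$ of $T_\ell$, $i$ is an ancestor of $j$ in $T_\ell$ if and only if $i$ is an ancestor of $j$ in $R$. Consequently, given the sets $V(T_1)$ and $V(T_2)$, the trees $T_1$ and $T_2$ can be recovered from $R$. (b) For every vertex $i$ of $T_1$, $\sigma_i(R)=\sigma_i(T_1)$; moreover $\sigma_{v_2}(R)=\sigma_{v_2}(T_2)+1$, and $\sigma_i(R)=\sigma_i(T_2)$ for every other vertex $i\ne v_2$ of $T_2$.
   Context: An unordered increasing tree is a rooted tree whose vertices are distinct positive integers, sons unordered, each son larger than its father. Ancestors/descendants are defined as usual in the rooted tree. $\sigma_i(T)$ denotes the number of sons of vertex $i$ in $T$. $v$-decomposition: for a vertex $v$ of an unordered increasing tree $T$, let $a_1<a_2<\dots<a_k=v$ be the chain from the root $a_1$ to $v$. Removing the edges of this chain leaves $k$ components, each an unordered increasing tree rooted at some $a_i$; call $T^{(a_i)}$ the component rooted at $a_i$. The list $T^{(a_1)},\dots,T^{(a_k)}$ is the $v$-decomposition of $T$. Splice: let $T_1,T_2$ be unordered increasing trees with disjoint vertex-sets, $v_1\in V(T_1)$, $v_2\in V(T_2)$, $v_1>v_2$, with $v_1$-decomposition $T_1^{(a_1)},\dots,T_1^{(a_k)}$ of $T_1$ and $v_2$-decomposition $T_2^{(b_1)},\dots,T_2^{(b_m)}$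 of $T_2$. Then $\mathrm{spl}(T_1,v_1;T_2,v_2)$ is the unordered increasing tree on $V(T_1)\cup V(T_2)$ obtained by sorting $\{a_1,\dots,a_k\}\cup\{b_1,\dots,b_m\}$ increasingly into $c_1<\dots<c_{k+m}$ (so $c_{k+m}=v_1$), joining these into a chain with $c_1$ the root and $c_{s}$ the father of $c_{s+1}$, and attaching at each $c_s$ the tree among $T_1^{(a_i)},T_2^{(b_j)}$ rooted at $c_s$; equivalently it is the tree whose $v_1$-decomposition is the list of all the $T_1^{(a_i)}$ and $T_2^{(b_j)}$ ordered by their roots. *)

theory Defs
  imports Main
begin

text \<open>An unordered increasing tree is represented by its vertex set V (positive integers)
and its set E of edges (father, son).\<close>

definition inc_tree :: "nat set \<Rightarrow> (nat \<times> nat) set \<Rightarrow> bool" where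
  "inc_tree V E \<longleftrightarrow>
     finite V \<and> V \<noteq> {} \<and> 0 \<notin> V \<and> E \<subseteq> V \<times> V \<and>
     (\<forall>(a, b) \<in> E. a < b) \<and>
     (\<exists>!r. r \<in> V \<and> (\<forall>a. (a, r) \<notin> E) \<and>
        (\<forall>b \<in> V. b \<noteq> r \<longrightarrow> (\<exists>!a. (a, b) \<in> E)))"

definition ancestor :: "(nat \<times> nat) set \<Rightarrow> nat \<Rightarrow> nat \<Rightarrow> bool" where
  "ancestor E i j \<longleftrightarrow> (i, j) \<in> E\<^sup>+"

definition sons :: "(nat \<times> nat) set \<Rightarrow> nat \<Rightarrow> nat" where
  "sons E i = card {j. (i, j) \<in> E}"

text \<open>v-decomposition: the chain a_1 < ... < a_k = v from the root to v, and the
components T^(a) obtained by deleting the chain edges.\<close>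
definition chain_to :: "(nat \<times> nat) set \<Rightarrow> nat \<Rightarrow> nat set" where
  "chain_to E v = {a. (a, v) \<in> E\<^sup>*}"

definition rest_edges :: "(nat \<times> nat) set \<Rightarrow> nat \<Rightarrow> (nat \<times> nat) set" where
  "rest_edges E v = {(x, y) \<in> E. \<not> (x \<in> chain_to E v \<and> y \<in> chain_to E v)}"

definition comp_verts :: "(nat \<times> nat) set \<Rightarrow> nat \<Rightarrow> nat \<Rightarrow> nat set" where
  "comp_verts E v a = {x. (a, x) \<in> (rest_edges E v)\<^sup>*}"

definition comp_edges :: "(nat \<times> nat) set \<Rightarrow> nat \<Rightarrow> nat \<Rightarrow> (nat \<times> nat) set" where
  "comp_edges E v a = {(x, y) \<in> rest_edges E v. x \<in> comp_verts E v a}"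

definition chain_edges :: "nat set \<Rightarrow> (nat \<times> nat) set" where
  "chain_edges C = {(c, d). c \<in> C \<and> d \<in> C \<and> c < d \<and> \<not> (\<exists>e \<in> C. c < e \<and> e < d)}"

definition spl_edges :: "(nat \<times> nat) set \<Rightarrow> nat \<Rightarrow> (nat \<times> nat) set \<Rightarrow> nat \<Rightarrow> (nat \<times> nat) set" where
  "spl_edges E1 v1 E2 v2 =
     chain_edges (chain_to E1 v1 \<union> chain_to E2 v2) \<union>
     (\<Union>a \<in> chain_to E1 v1. comp_edges E1 v1 a) \<union>
     (\<Union>b \<in> chain_to E2 v2. comp_edges E2 v2 b)"

end

theory Submission
  imports Defs
begin

lemma tree_sub: "inc_tree V E \<Longrightarrow> E \<subseteq> V \<times> V" by (simp add: inc_tree_def)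

lemma tree_lt: "inc_tree V E \<Longrightarrow> (a,b)\<in>E \<Longrightarrow> a<b" unfolding inc_tree_def by blast

lemma tree_trancl_lt:
  assumes "inc_tree V E" "(a,b)\<in>E\<^sup>+" shows "a<b"
  using assms(2) by induct (auto dest: tree_lt[OF assms(1)])

lemma tree_rtrancl_le:
  assumes "inc_tree V E" "(a,b)\<in>E\<^sup>*" shows "a\<le>b"
  using assms(2) tree_trancl_lt[OF assms(1)] by (force simp: rtrancl_eq_or_trancl)

lemma tree_par_unique:
  assumes T: "inc_tree V E" and ab: "(a,b)\<in>E" and cb: "(c,b)\<in>E" shows "a = c"
proof -
  obtain r where r: "r \<in> V" "\<forall>a. (a, r) \<notin> E" "\<forall>b \<in> V. b \<noteq> r \<longrightarrow> (\<exists>!a. (a, b) \<in> E)"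
    using T unfolding inc_tree_def by blast
  have "b \<in> V" using tree_sub[OF T] ab by blast
  moreover have "b \<noteq> r" using r(2) ab by blast
  ultimately show ?thesis using r(3) ab cb by blast
qed

lemma tree_root:
  assumes T: "inc_tree V E"
  obtains r where "r \<in> V" "\<forall>b\<in>V. (r,b)\<in>E\<^sup>*" "\<forall>b\<in>V. b \<noteq> r \<longrightarrow> (\<exists>a. (a,b)\<in>E)"
proof -
  obtain r where r: "r \<in> V" "\<forall>a. (a, r) \<notin> E" "\<forall>b \<in> V. b \<noteq> r \<longrightarrow> (\<exists>!a. (a, b) \<in> E)"
    using T unfolding inc_tree_def by blast
  have "b \<in> V \<longrightarrow> (r,b)\<in>E\<^sup>*" for b
  proof (induction b rule: less_induct)
    case (less b)
    show ?case
    proof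
      assume b: "b \<in> V"
      show "(r,b)\<in>E\<^sup>*"
      proof (cases "b = r")
        case True then show ?thesis by simp
      next
        case False
        then obtain a where a: "(a,b)\<in>E" using r(3) b by blast
        have "a < b" using tree_lt[OF T a] .
        moreover have "a \<in> V" using tree_sub[OF T] a by blast
        ultimately have "(r,a)\<in>E\<^sup>*" using less by blast
        then show ?thesis using a by (rule rtrancl_into_rtrancl)
      qed
    qed
  qed
  then show ?thesis using that r by blast
qed

lemma chain_mem: "a \<in> chain_to E v \<longleftrightarrow> (a,v)\<in>E\<^sup>*" by (simp add: chain_to_def)

lemma chain_sub:
  assumes T: "inc_tree V E" and v: "v \<in> V" shows "chain_to E v \<subseteq> V"
proof
  fix a assume "a \<in> chain_to E v"
  then have "(a,v)\<in>E\<^sup>*" by (simp add: chain_mem)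
  then show "a \<in> V"
    by (cases rule: converse_rtranclE) (use v tree_sub[OF T] in auto)
qed

lemma chain_finite: "inc_tree V E \<Longrightarrow> v \<in> V \<Longrightarrow> finite (chain_to E v)"
  using chain_sub finite_subset inc_tree_def by metis

lemma chain_anc: "(i,x)\<in>E\<^sup>* \<Longrightarrow> x \<in> chain_to E v \<Longrightarrow> i \<in> chain_to E v"
  by (simp add: chain_mem)

lemma chain_le: "inc_tree V E \<Longrightarrow> x \<in> chain_to E v \<Longrightarrow> x \<le> v"
  by (simp add: chain_mem tree_rtrancl_le)

lemma chain_self: "v \<in> chain_to E v" by (simp add: chain_mem)

lemma tree_comparable:
  assumes T: "inc_tree V E" and ax: "(a,x)\<in>E\<^sup>*"
  shows "(b,x)\<in>E\<^sup>* \<longrightarrow> (a,b)\<in>E\<^sup>* \<or> (b,a)\<in>E\<^sup>*"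
  using ax
proof (induction rule: rtrancl_induct)
  case base then show ?case by blast
next
  case (step y z)
  show ?case
  proof
    assume bz: "(b,z)\<in>E\<^sup>*"
    then show "(a,b)\<in>E\<^sup>* \<or> (b,a)\<in>E\<^sup>*"
    proof (cases rule: rtranclE)
      case base then show ?thesis using step by (meson rtrancl_into_rtrancl)
    next
      case (step w)
      then have "w = y" using tree_par_unique[OF T] \<open>(y,z)\<in>E\<close> by blast
      then show ?thesis using step
        using \<open>(b, y) \<in> E\<^sup>* \<longrightarrow> (a, b) \<in> E\<^sup>* \<or> (b, a) \<in> E\<^sup>*\<close> by blast
    qed
  qed
qed

lemma chain_total:
  assumes T: "inc_tree V E" and a: "a \<in> chain_to E v" and b: "b \<in> chain_to E v" and ab: "a < b"
  shows "(a,b)\<in>E\<^sup>+"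
proof -
  have "(a,b)\<in>E\<^sup>* \<or> (b,a)\<in>E\<^sup>*" using tree_comparable[OF T] a b by (simp add: chain_mem)
  moreover have "(b,a)\<notin>E\<^sup>*" using tree_rtrancl_le[OF T] ab by fastforce
  ultimately have "(a,b)\<in>E\<^sup>*" by blast
  then show ?thesis using ab by (auto simp: rtrancl_eq_or_trancl)
qed

lemma tree_cover:
  assumes T: "inc_tree V E"
  shows "(a,b)\<in>E \<longleftrightarrow> (a,b)\<in>E\<^sup>+ \<and> \<not>(\<exists>c. (a,c)\<in>E\<^sup>+ \<and> (c,b)\<in>E\<^sup>+)"
proof
  assume ab: "(a,b)\<in>E"
  have "\<not>(\<exists>c. (a,c)\<in>E\<^sup>+ \<and> (c,b)\<in>E\<^sup>+)"
  proof
    assume "\<exists>c. (a,c)\<in>E\<^sup>+ \<and> (c,b)\<in>E\<^sup>+"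
    then obtain c where ac: "(a,c)\<in>E\<^sup>+" and cb: "(c,b)\<in>E\<^sup>+" by blast
    from cb obtain w where "(c,w)\<in>E\<^sup>*" "(w,b)\<in>E" by (meson tranclD2)
    then have "w = a" using tree_par_unique[OF T] ab by blast
    then have "c \<le> a" using \<open>(c,w)\<in>E\<^sup>*\<close> tree_rtrancl_le[OF T] by blast
    moreover have "a < c" using tree_trancl_lt[OF T ac] .
    ultimately show False by simp
  qed
  then show "(a,b)\<in>E\<^sup>+ \<and> \<not>(\<exists>c. (a,c)\<in>E\<^sup>+ \<and> (c,b)\<in>E\<^sup>+)" using ab by blast
next
  assume h: "(a,b)\<in>E\<^sup>+ \<and> \<not>(\<exists>c. (a,c)\<in>E\<^sup>+ \<and> (c,b)\<in>E\<^sup>+)"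
  then obtain w where aw: "(a,w)\<in>E\<^sup>*" and wb: "(w,b)\<in>E" by (meson tranclD2)
  show "(a,b)\<in>E"
  proof (cases "a = w")
    case True then show ?thesis using wb by simp
  next
    case False
    then have "(a,w)\<in>E\<^sup>+" using aw by (auto simp: rtrancl_eq_or_trancl)
    then show ?thesis using h wb by blast
  qed
qed

lemma tree_ext_eq:
  assumes T: "inc_tree V E" and T': "inc_tree V E'"
    and h: "\<forall>i\<in>V. \<forall>j\<in>V. (i,j)\<in>E\<^sup>+ \<longleftrightarrow> (i,j)\<in>E'\<^sup>+"
  shows "E = E'"
proof -
  have s1: "E\<^sup>+ \<subseteq> V \<times> V" using tree_sub[OF T] by (rule trancl_subset_Sigma)
  have s2: "E'\<^sup>+ \<subseteq> V \<times> V" using tree_sub[OF T'] by (rule trancl_subset_Sigma)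
  have "E\<^sup>+ = E'\<^sup>+" using s1 s2 h by auto
  then show ?thesis using tree_cover[OF T] tree_cover[OF T'] by auto
qed

lemma chain_E_eq:
  assumes T: "inc_tree V E"
  shows "E \<inter> (chain_to E v \<times> chain_to E v) = chain_edges (chain_to E v)"
proof (intro set_eqI iffI)
  fix p assume p: "p \<in> E \<inter> (chain_to E v \<times> chain_to E v)"
  obtain a b where pab: "p = (a,b)" by (cases p)
  have ab: "(a,b)\<in>E" "a \<in> chain_to E v" "b \<in> chain_to E v" using p pab by auto
  have "\<not> (\<exists>e \<in> chain_to E v. a < e \<and> e < b)"
  proof
    assume "\<exists>e \<in> chain_to E v. a < e \<and> e < b"
    then obtain e where "e \<in> chain_to E v" "a < e" "e < b" by blast
    then have "(a,e)\<in>E\<^sup>+" "(e,b)\<in>E\<^sup>+" using chain_total[OF T] ab by blast+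
    then show False using tree_cover[OF T] ab(1) by blast
  qed
  then show "p \<in> chain_edges (chain_to E v)"
    using ab tree_lt[OF T ab(1)] pab by (simp add: chain_edges_def)
next
  fix p assume p: "p \<in> chain_edges (chain_to E v)"
  obtain a b where pab: "p = (a,b)" by (cases p)
  have ab: "a \<in> chain_to E v" "b \<in> chain_to E v" "a < b"
    and nb: "\<not> (\<exists>e \<in> chain_to E v. a < e \<and> e < b)"
    using p pab by (auto simp: chain_edges_def)
  have "(a,b)\<in>E\<^sup>+" using chain_total[OF T ab] .
  then obtain w where aw: "(a,w)\<in>E\<^sup>*" and wb: "(w,b)\<in>E" by (meson tranclD2)
  have wc: "w \<in> chain_to E v" using wb ab(2) by (meson chain_anc r_into_rtrancl)
  have "a \<le> w" using tree_rtrancl_le[OF T aw] .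
  moreover have "w < b" using tree_lt[OF T wb] .
  ultimately have "w = a" using nb wc by force
  then show "p \<in> E \<inter> (chain_to E v \<times> chain_to E v)" using wb ab pab by simp
qed

lemma rest_sub: "rest_edges E v \<subseteq> E" by (auto simp: rest_edges_def)

lemma rest_comp:
  assumes T: "inc_tree V E" and v: "v \<in> V"
  shows "(\<Union>a \<in> chain_to E v. comp_edges E v a) = rest_edges E v"
proof
  show "(\<Union>a \<in> chain_to E v. comp_edges E v a) \<subseteq> rest_edges E v"
    by (auto simp: comp_edges_def)
next
  obtain r where r: "r \<in> V" "\<forall>b\<in>V. (r,b)\<in>E\<^sup>*" "\<forall>b\<in>V. b \<noteq> r \<longrightarrow> (\<exists>a. (a,b)\<in>E)"
    using tree_root[OF T] by blast
  have rc: "r \<in> chain_to E v" using r(2) v by (simp add: chain_mem)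
  have reach: "x \<in> V \<longrightarrow> (\<exists>a\<in>chain_to E v. (a,x)\<in>(rest_edges E v)\<^sup>*)" for x
  proof (induction x rule: less_induct)
    case (less x)
    show ?case
    proof
      assume x: "x \<in> V"
      show "\<exists>a\<in>chain_to E v. (a,x)\<in>(rest_edges E v)\<^sup>*"
      proof (cases "x \<in> chain_to E v")
        case True then show ?thesis by blast
      next
        case False
        then have "x \<noteq> r" using rc by blast
        then obtain p where p: "(p,x)\<in>E" using r(3) x by blast
        have "(p,x)\<in>rest_edges E v" using p False by (simp add: rest_edges_def)
        moreover have "p \<in> V" using tree_sub[OF T] p by blast
        moreover have "p < x" using tree_lt[OF T p] .
        ultimately show ?thesis using less by (meson rtrancl.rtrancl_into_rtrancl)
      qed
    qed
  qed
  show "rest_edges E v \<subseteq> (\<Union>a \<in> chain_to E v. comp_edges E v a)"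
  proof
    fix p assume p: "p \<in> rest_edges E v"
    obtain x y where pxy: "p = (x,y)" by (cases p)
    have "x \<in> V" using p pxy rest_sub tree_sub[OF T] by blast
    then obtain a where "a\<in>chain_to E v" "(a,x)\<in>(rest_edges E v)\<^sup>*" using reach by blast
    then show "p \<in> (\<Union>a \<in> chain_to E v. comp_edges E v a)"
      using p pxy by (auto simp: comp_edges_def comp_verts_def)
  qed
qed

lemma spl_eq:
  assumes "inc_tree V1 E1" "inc_tree V2 E2" "v1 \<in> V1" "v2 \<in> V2"
  shows "spl_edges E1 v1 E2 v2 = chain_edges (chain_to E1 v1 \<union> chain_to E2 v2) \<union> rest_edges E1 v1 \<union> rest_edges E2 v2"
  unfolding spl_edges_def using rest_comp assms by metis

lemma ce_trancl:
  assumes fin: "finite D" and c: "c\<in>D"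
  shows "d\<in>D \<Longrightarrow> c<d \<Longrightarrow> (c,d) \<in> (chain_edges D)\<^sup>+"
proof (induction d rule: less_induct)
  case (less d)
  let ?S = "{e\<in>D. c \<le> e \<and> e < d}"
  have fS: "finite ?S" using fin by simp
  have cS: "c \<in> ?S" using c less by simp
  define e where "e = Max ?S"
  have eS: "e \<in> ?S" unfolding e_def using fS cS Max_in by blast
  have ed: "(e,d)\<in>chain_edges D"
  proof -
    have "\<not>(\<exists>e'\<in>D. e < e' \<and> e' < d)"
    proof
      assume "\<exists>e'\<in>D. e < e' \<and> e' < d"
      then obtain e' where "e'\<in>D" "e<e'" "e'<d" by blast
      then have "e' \<in> ?S" using eS by auto
      then have "e' \<le> e" unfolding e_def using fS Max_ge by blast
      then show False using \<open>e<e'\<close> by simp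
    qed
    then show ?thesis using eS less by (simp add: chain_edges_def)
  qed
  show ?case
  proof (cases "e = c")
    case True then show ?thesis using ed by simp
  next
    case False
    then have "c < e" "e < d" "e \<in> D" using eS by auto
    then have "(c,e) \<in> (chain_edges D)\<^sup>+" using less by blast
    then show ?thesis using ed by (rule trancl_into_trancl)
  qed
qed

lemma ce_succ_card:
  assumes fin: "finite D"
  shows "card {j. (i,j)\<in>chain_edges D} = (if i\<in>D \<and> (\<exists>d\<in>D. i<d) then 1 else 0)"
proof (cases "i\<in>D \<and> (\<exists>d\<in>D. i<d)")
  case True
  let ?S = "{d\<in>D. i<d}"
  define m where "m = Min ?S"
  have fS: "finite ?S" "?S \<noteq> {}" using fin True by auto
  have mS: "m \<in> ?S" unfolding m_def using fS Min_in by blast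
  have "{j. (i,j)\<in>chain_edges D} = {m}"
  proof (intro set_eqI iffI)
    fix j assume "j \<in> {j. (i,j)\<in>chain_edges D}"
    then have j: "j\<in>D" "i<j" "\<not>(\<exists>e\<in>D. i<e \<and> e<j)" by (auto simp: chain_edges_def)
    have "m \<le> j" unfolding m_def using fS j Min_le by blast
    then show "j \<in> {m}" using j mS by force
  next
    fix j assume "j \<in> {m}"
    then have jm: "j = m" by simp
    have "\<not>(\<exists>e\<in>D. i<e \<and> e<m)"
    proof
      assume "\<exists>e\<in>D. i<e \<and> e<m"
      then obtain e where "e\<in>D" "i<e" "e<m" by blast
      then have "m \<le> e" unfolding m_def using fS Min_le by blast
      then show False using \<open>e<m\<close> by simp
    qed
    then show "j \<in> {j. (i,j)\<in>chain_edges D}" using jm mS True by (simp add: chain_edges_def)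
  qed
  then show ?thesis using True by simp
next
  case False
  then have "{j. (i,j)\<in>chain_edges D} = {}" by (auto simp: chain_edges_def)
  then show ?thesis using False by simp
qed


lemma anc_main:
  assumes T1: "inc_tree V1 E1" and T2: "inc_tree V2 E2" and disj: "V1 \<inter> V2 = {}"
    and v1: "v1 \<in> V1" and v2: "v2 \<in> V2" and i: "i \<in> V1" and j: "j \<in> V1"
  defines "C1 \<equiv> chain_to E1 v1" and "C2 \<equiv> chain_to E2 v2"
  defines "R \<equiv> chain_edges (C1 \<union> C2) \<union> rest_edges E1 v1 \<union> rest_edges E2 v2"
  shows "(i,j)\<in>E1\<^sup>+ \<longleftrightarrow> (i,j)\<in>R\<^sup>+"
proof
  have C1V: "C1 \<subseteq> V1" unfolding C1_def using chain_sub[OF T1 v1] .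
  have C2V: "C2 \<subseteq> V2" unfolding C2_def using chain_sub[OF T2 v2] .
  have fin: "finite (C1 \<union> C2)" unfolding C1_def C2_def using chain_finite T1 T2 v1 v2 by blast
  have edge: "(a,b)\<in>R\<^sup>+" if ab: "(a,b)\<in>E1" for a b
  proof (cases "a \<in> C1 \<and> b \<in> C1")
    case True
    have "a < b" using tree_lt[OF T1 ab] .
    then have "(a,b)\<in>(chain_edges (C1 \<union> C2))\<^sup>+" using ce_trancl[OF fin] True by blast
    moreover have "chain_edges (C1 \<union> C2) \<subseteq> R" unfolding R_def by blast
    ultimately show ?thesis using trancl_mono by blast
  next
    case False
    then have "(a,b)\<in>rest_edges E1 v1" using ab by (simp add: rest_edges_def C1_def)
    then show ?thesis unfolding R_def by blast
  qed
  assume "(i,j)\<in>E1\<^sup>+"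
  then show "(i,j)\<in>R\<^sup>+"
    by induct (use edge in \<open>blast intro: trancl_trans\<close>)+
next
  have C1V: "C1 \<subseteq> V1" unfolding C1_def using chain_sub[OF T1 v1] .
  have C2V: "C2 \<subseteq> V2" unfolding C2_def using chain_sub[OF T2 v2] .
  assume ij: "(i,j)\<in>R\<^sup>+"
  define P where "P y \<longleftrightarrow> (y\<in>V1 \<and> (i,y)\<in>E1\<^sup>*) \<or> (y\<in>V2 \<and> (y\<in>C2 \<longrightarrow> i\<in>C1 \<and> i<y))" for y
  have Rlt: "a < b" if "(a,b)\<in>R" for a b
    using that tree_lt[OF T1] tree_lt[OF T2] rest_sub
    unfolding R_def by (auto simp: chain_edges_def rest_edges_def)
  have Rtlt: "(a,b)\<in>R\<^sup>+ \<Longrightarrow> a < b" for a b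
    by (induct rule: trancl_induct) (auto dest: Rlt)
  have "P y" if "(i,y)\<in>R\<^sup>*" for y
    using that
  proof (induction rule: rtrancl_induct)
    case base then show ?case using i by (simp add: P_def)
  next
    case (step y z)
    have yz: "(y,z)\<in>R" by fact
    have Py: "P y" by fact
    consider (ce) "(y,z)\<in>chain_edges (C1 \<union> C2)" | (r1) "(y,z)\<in>rest_edges E1 v1"
      | (r2) "(y,z)\<in>rest_edges E2 v2" using yz unfolding R_def by blast
    then show ?case
    proof cases
      case ce
      then have yzC: "y \<in> C1 \<union> C2" "z \<in> C1 \<union> C2" "y < z" by (auto simp: chain_edges_def)
      show ?thesis
      proof (cases "y\<in>V1 \<and> (i,y)\<in>E1\<^sup>*")
        case True
        then have yC1: "y \<in> C1" using yzC C2V disj by blast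
        have iC1: "i \<in> C1" using True yC1 unfolding C1_def by (meson chain_anc)
        have iy: "i \<le> y" using tree_rtrancl_le[OF T1] True by blast
        show ?thesis
        proof (cases "z \<in> C1")
          case True
          then have "(y,z)\<in>E1\<^sup>+" using chain_total[OF T1] yC1 yzC unfolding C1_def by blast
          then have "(i,z)\<in>E1\<^sup>*" using \<open>y\<in>V1 \<and> (i,y)\<in>E1\<^sup>*\<close> by auto
          then show ?thesis using True C1V by (auto simp: P_def)
        next
          case False
          then have "z \<in> C2" using yzC by blast
          then show ?thesis using C2V iC1 iy yzC by (auto simp: P_def)
        qed
      next
        case False
        then have yV2: "y \<in> V2" "y\<in>C2 \<longrightarrow> i\<in>C1 \<and> i<y" using Py by (auto simp: P_def)
        have "y \<notin> C1" using yV2 C1V disj by blast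
        then have "y \<in> C2" using yzC by blast
        then have iC1: "i\<in>C1" "i<y" using yV2 by auto
        show ?thesis
        proof (cases "z \<in> C1")
          case True
          have "i < z" using iC1 yzC by simp
          then have "(i,z)\<in>E1\<^sup>+" using chain_total[OF T1] iC1 True unfolding C1_def by blast
          then show ?thesis using True C1V by (auto simp: P_def dest: trancl_into_rtrancl)
        next
          case False
          then have "z \<in> C2" using yzC by blast
          then show ?thesis using C2V iC1 yzC by (auto simp: P_def)
        qed
      qed
    next
      case r1
      then have e: "(y,z)\<in>E1" using rest_sub by blast
      then have "y \<in> V1" "z \<in> V1" using tree_sub[OF T1] by auto
      then have "(i,y)\<in>E1\<^sup>*" using Py disj by (auto simp: P_def)
      then have "(i,z)\<in>E1\<^sup>*" using e by simp
      then show ?thesis using \<open>z\<in>V1\<close> by (simp add: P_def)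
    next
      case r2
      then have e: "(y,z)\<in>E2" and nb: "\<not>(y\<in>C2 \<and> z\<in>C2)" by (auto simp: rest_edges_def C2_def)
      then have "z \<in> V2" using tree_sub[OF T2] by auto
      moreover have "z \<notin> C2"
      proof
        assume "z \<in> C2"
        then have "y \<in> C2" using e unfolding C2_def by (meson chain_anc r_into_rtrancl)
        then show False using nb \<open>z\<in>C2\<close> by blast
      qed
      ultimately show ?thesis by (simp add: P_def)
    qed
  qed
  then have "P j" using ij by (simp add: trancl_into_rtrancl)
  then have "(i,j)\<in>E1\<^sup>*" using j disj by (auto simp: P_def)
  moreover have "i \<noteq> j" using Rtlt[OF ij] by simp
  ultimately show "(i,j)\<in>E1\<^sup>+" by (auto simp: rtrancl_eq_or_trancl)
qed

lemma sons_gen: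
  assumes T: "inc_tree V E" and v: "v \<in> V" and fin: "finite D"
    and sub: "chain_to E v \<subseteq> D" and dis: "D \<inter> V \<subseteq> chain_to E v" and i: "i \<in> V"
  shows "card ({j. (i,j)\<in>rest_edges E v} \<union> {j. (i,j)\<in>chain_edges D})
           + card {j. (i,j)\<in>chain_edges (chain_to E v)}
         = sons E i + card {j. (i,j)\<in>chain_edges D}"
proof -
  let ?C = "chain_to E v"
  let ?A = "{j. (i,j)\<in>rest_edges E v}"
  let ?B = "{j. (i,j)\<in>chain_edges D}"
  let ?Bc = "{j. (i,j)\<in>chain_edges ?C}"
  have fV: "finite V" using T by (simp add: inc_tree_def)
  have fA: "finite ?A" using rest_sub tree_sub[OF T] by (intro finite_subset[OF _ fV]) blast
  have "?B \<subseteq> D" by (auto simp: chain_edges_def)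
  then have fB: "finite ?B" using fin finite_subset by blast
  have fC: "finite ?C" using chain_finite[OF T v] .
  have "?Bc \<subseteq> ?C" by (auto simp: chain_edges_def)
  then have fB0: "finite ?Bc" using fC finite_subset by blast
  have dAB: "?A \<inter> ?B = {}"
  proof (intro equals0I)
    fix j assume "j \<in> ?A \<inter> ?B"
    then have r: "(i,j)\<in>rest_edges E v" and c: "(i,j)\<in>chain_edges D" by auto
    have "i \<in> V" "j \<in> V" using r rest_sub tree_sub[OF T] by blast+
    moreover have "i \<in> D" "j \<in> D" using c by (auto simp: chain_edges_def)
    ultimately have "i \<in> ?C" "j \<in> ?C" using dis by blast+
    then show False using r by (simp add: rest_edges_def)
  qed
  have dAB0: "?A \<inter> ?Bc = {}"
  proof (intro equals0I)
    fix j assume "j \<in> ?A \<inter> ?Bc"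
    then have r: "(i,j)\<in>rest_edges E v" and c: "(i,j)\<in>chain_edges ?C" by auto
    have "i \<in> ?C" "j \<in> ?C" using c by (auto simp: chain_edges_def)
    then show False using r by (simp add: rest_edges_def)
  qed
  have eq: "{j. (i,j)\<in>E} = ?A \<union> ?Bc"
    using chain_E_eq[OF T, of v] unfolding rest_edges_def by blast
  have "sons E i = card ?A + card ?Bc" unfolding sons_def eq
    using card_Un_disjoint[OF fA fB0 dAB0] .
  moreover have "card (?A \<union> ?B) = card ?A + card ?B" using card_Un_disjoint[OF fA fB dAB] .
  ultimately show ?thesis by simp
qed


theorem lemma2p4:
  fixes V1 V2 :: "nat set" and E1 E2 :: "(nat \<times> nat) set" and v1 v2 :: nat
  assumes T1: "inc_tree V1 E1" and T2: "inc_tree V2 E2"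
    and disj: "V1 \<inter> V2 = {}"
    and v1: "v1 \<in> V1" and v2: "v2 \<in> V2" and gt: "v1 > v2"
  defines "R \<equiv> spl_edges E1 v1 E2 v2"
  shows
    "(\<forall>i \<in> V1. \<forall>j \<in> V1. ancestor E1 i j \<longleftrightarrow> ancestor R i j) \<and>
     (\<forall>i \<in> V2. \<forall>j \<in> V2. ancestor E2 i j \<longleftrightarrow> ancestor R i j) \<and>
     (\<forall>E1' E2' v1' v2'. inc_tree V1 E1' \<longrightarrow> inc_tree V2 E2' \<longrightarrow>
        v1' \<in> V1 \<longrightarrow> v2' \<in> V2 \<longrightarrow> v1' > v2' \<longrightarrow>
        spl_edges E1' v1' E2' v2' = R \<longrightarrow> E1' = E1 \<and> E2' = E2) \<and>
     (\<forall>i \<in> V1. sons R i = sons E1 i) \<and>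
     sons R v2 = sons E2 v2 + 1 \<and>
     (\<forall>i \<in> V2. i \<noteq> v2 \<longrightarrow> sons R i = sons E2 i)"
proof -
  have disj': "V2 \<inter> V1 = {}" using disj by blast
  have gen: "(\<forall>i \<in> W1. \<forall>j \<in> W1. (i,j)\<in>F1\<^sup>+ \<longleftrightarrow> (i,j)\<in>(spl_edges F1 w1 F2 w2)\<^sup>+) \<and>
             (\<forall>i \<in> W2. \<forall>j \<in> W2. (i,j)\<in>F2\<^sup>+ \<longleftrightarrow> (i,j)\<in>(spl_edges F1 w1 F2 w2)\<^sup>+)"
    if A: "inc_tree W1 F1" "inc_tree W2 F2" "W1 \<inter> W2 = {}" "w1 \<in> W1" "w2 \<in> W2"
    for W1 W2 F1 F2 w1 w2
  proof -
    have e1: "spl_edges F1 w1 F2 w2 = chain_edges (chain_to F1 w1 \<union> chain_to F2 w2) \<union> rest_edges F1 w1 \<union> rest_edges F2 w2"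
      using spl_eq A by blast
    have e2: "spl_edges F1 w1 F2 w2 = chain_edges (chain_to F2 w2 \<union> chain_to F1 w1) \<union> rest_edges F2 w2 \<union> rest_edges F1 w1"
      unfolding e1 by (simp add: Un_ac)
    have "W2 \<inter> W1 = {}" using A by blast
    show ?thesis
      using anc_main[OF A(1,2,3,4,5)] anc_main[OF A(2,1) \<open>W2 \<inter> W1 = {}\<close> A(5,4)]
      unfolding e1[symmetric] e2[symmetric] by blast
  qed
  have a12: "(\<forall>i \<in> V1. \<forall>j \<in> V1. ancestor E1 i j \<longleftrightarrow> ancestor R i j) \<and>
     (\<forall>i \<in> V2. \<forall>j \<in> V2. ancestor E2 i j \<longleftrightarrow> ancestor R i j)"
    unfolding ancestor_def R_def using gen[OF T1 T2 disj v1 v2] by blast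
  have a3: "\<forall>E1' E2' v1' v2'. inc_tree V1 E1' \<longrightarrow> inc_tree V2 E2' \<longrightarrow>
        v1' \<in> V1 \<longrightarrow> v2' \<in> V2 \<longrightarrow> v1' > v2' \<longrightarrow>
        spl_edges E1' v1' E2' v2' = R \<longrightarrow> E1' = E1 \<and> E2' = E2"
  proof (intro allI impI)
    fix E1' E2' v1' v2'
    assume h: "inc_tree V1 E1'" "inc_tree V2 E2'" "v1' \<in> V1" "v2' \<in> V2" "v1' > v2'"
      "spl_edges E1' v1' E2' v2' = R"
    have g': "(\<forall>i \<in> V1. \<forall>j \<in> V1. (i,j)\<in>E1'\<^sup>+ \<longleftrightarrow> (i,j)\<in>R\<^sup>+) \<and>
             (\<forall>i \<in> V2. \<forall>j \<in> V2. (i,j)\<in>E2'\<^sup>+ \<longleftrightarrow> (i,j)\<in>R\<^sup>+)"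
      using gen[OF h(1,2) disj h(3,4)] h(6) by simp
    have g: "(\<forall>i \<in> V1. \<forall>j \<in> V1. (i,j)\<in>E1\<^sup>+ \<longleftrightarrow> (i,j)\<in>R\<^sup>+) \<and>
             (\<forall>i \<in> V2. \<forall>j \<in> V2. (i,j)\<in>E2\<^sup>+ \<longleftrightarrow> (i,j)\<in>R\<^sup>+)"
      using gen[OF T1 T2 disj v1 v2] unfolding R_def by simp
    have "E1 = E1'" using tree_ext_eq[OF T1 h(1)] g g' by blast
    moreover have "E2 = E2'" using tree_ext_eq[OF T2 h(2)] g g' by blast
    ultimately show "E1' = E1 \<and> E2' = E2" by simp
  qed
  define C1 where "C1 = chain_to E1 v1"
  define C2 where "C2 = chain_to E2 v2"
  define D where "D = C1 \<union> C2"
  have C1V: "C1 \<subseteq> V1" unfolding C1_def using chain_sub[OF T1 v1] .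
  have C2V: "C2 \<subseteq> V2" unfolding C2_def using chain_sub[OF T2 v2] .
  have finD: "finite D" unfolding D_def C1_def C2_def using chain_finite T1 T2 v1 v2 by blast
  have RE: "R = chain_edges D \<union> rest_edges E1 v1 \<union> rest_edges E2 v2"
    unfolding R_def D_def C1_def C2_def using spl_eq[OF T1 T2 v1 v2] .
  have fin1: "finite C1" unfolding C1_def using chain_finite[OF T1 v1] .
  have fin2: "finite C2" unfolding C2_def using chain_finite[OF T2 v2] .
  have C1le: "x \<le> v1" if "x \<in> C1" for x using chain_le[OF T1] that unfolding C1_def by blast
  have C2le: "x \<le> v2" if "x \<in> C2" for x using chain_le[OF T2] that unfolding C2_def by blast
  have v1C: "v1 \<in> C1" unfolding C1_def by (rule chain_self)
  have v2C: "v2 \<in> C2" unfolding C2_def by (rule chain_self)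
  have r1V: "rest_edges E1 v1 \<subseteq> V1 \<times> V1" using rest_sub tree_sub[OF T1] by blast
  have r2V: "rest_edges E2 v2 \<subseteq> V2 \<times> V2" using rest_sub tree_sub[OF T2] by blast
  have s1: "sons R i = sons E1 i" if i: "i \<in> V1" for i
  proof -
    have sR: "{j. (i,j)\<in>R} = {j. (i,j)\<in>rest_edges E1 v1} \<union> {j. (i,j)\<in>chain_edges D}"
      unfolding RE using r2V i disj by blast
    have sg: "card ({j. (i,j)\<in>rest_edges E1 v1} \<union> {j. (i,j)\<in>chain_edges D})
           + card {j. (i,j)\<in>chain_edges C1} = sons E1 i + card {j. (i,j)\<in>chain_edges D}"
      using sons_gen[OF T1 v1 finD _ _ i] C1V C2V disj unfolding D_def C1_def by blast
    have "card {j. (i,j)\<in>chain_edges C1} = card {j. (i,j)\<in>chain_edges D}"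
      unfolding ce_succ_card[OF fin1] ce_succ_card[OF finD]
    proof -
      have "(i\<in>C1 \<and> (\<exists>d\<in>C1. i<d)) \<longleftrightarrow> (i\<in>D \<and> (\<exists>d\<in>D. i<d))"
      proof
        assume "i\<in>D \<and> (\<exists>d\<in>D. i<d)"
        then have "i \<in> C1" "\<exists>d\<in>D. i<d" using i C2V disj unfolding D_def by blast+
        then obtain d where "d\<in>D" "i<d" by blast
        then have "i < v1" using C1le C2le gt unfolding D_def by fastforce
        then show "i\<in>C1 \<and> (\<exists>d\<in>C1. i<d)" using \<open>i\<in>C1\<close> v1C by blast
      qed (auto simp: D_def)
      then show "(if i\<in>C1 \<and> (\<exists>d\<in>C1. i<d) then 1 else 0) = (if i\<in>D \<and> (\<exists>d\<in>D. i<d) then 1 else (0::nat))"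
        by simp
    qed
    then show ?thesis using sg sR unfolding sons_def by simp
  qed
  have s2: "sons R i + card {j. (i,j)\<in>chain_edges C2} = sons E2 i + card {j. (i,j)\<in>chain_edges D}"
    if i: "i \<in> V2" for i
  proof -
    have sR: "{j. (i,j)\<in>R} = {j. (i,j)\<in>rest_edges E2 v2} \<union> {j. (i,j)\<in>chain_edges D}"
      unfolding RE using r1V i disj by blast
    have a: "C2 \<subseteq> D" "D \<inter> V2 \<subseteq> C2" using C1V C2V disj unfolding D_def by blast+
    show ?thesis
      using sons_gen[OF T2 v2 finD a[unfolded C2_def] i] sR unfolding C2_def sons_def by simp
  qed
  have s3: "sons R v2 = sons E2 v2 + 1"
  proof -
    have "card {j. (v2,j)\<in>chain_edges C2} = 0"
      unfolding ce_succ_card[OF fin2] using C2le by force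
    moreover have "card {j. (v2,j)\<in>chain_edges D} = 1"
      unfolding ce_succ_card[OF finD] using v1C v2C gt by (auto simp: D_def)
    ultimately show ?thesis using s2[OF v2] by simp
  qed
  have s4: "sons R i = sons E2 i" if i: "i \<in> V2" "i \<noteq> v2" for i
  proof -
    have "card {j. (i,j)\<in>chain_edges C2} = card {j. (i,j)\<in>chain_edges D}"
      unfolding ce_succ_card[OF fin2] ce_succ_card[OF finD]
    proof -
      have "(i\<in>C2 \<and> (\<exists>d\<in>C2. i<d)) \<longleftrightarrow> (i\<in>D \<and> (\<exists>d\<in>D. i<d))"
      proof
        assume "i\<in>D \<and> (\<exists>d\<in>D. i<d)"
        then have "i \<in> C2" using i C1V disj unfolding D_def by blast
        then have "i < v2" using C2le i(2) by fastforce
        then show "i\<in>C2 \<and> (\<exists>d\<in>C2. i<d)" using \<open>i\<in>C2\<close> v2C by blast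
      next
        assume "i\<in>C2 \<and> (\<exists>d\<in>C2. i<d)"
        then show "i\<in>D \<and> (\<exists>d\<in>D. i<d)" by (auto simp: D_def)
      qed
      then show "(if i\<in>C2 \<and> (\<exists>d\<in>C2. i<d) then 1 else 0) = (if i\<in>D \<and> (\<exists>d\<in>D. i<d) then 1 else (0::nat))"
        by simp
    qed
    then show ?thesis using s2[OF i(1)] by simp
  qed
  show ?thesis using a12 a3 s1 s3 s4 by blast
qed

end
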